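(* Let $a,b\ge 1$ be integers and let $H$ be a finite simple graph that contains no (not necessarily induced) subgraph isomorphic to the complete bipartite graph $K_{a,b}$. Then $\|\mathcal{N}[H]\|$ strong deformation retracts onto a subspace that is the geometric realization of a simplicial complex of dimension at most $a+b-3$.
   Context: For a graph $G$, the neighborhood complex $\mathcal{N}[G]$ is the simplicial complex on vertex set $V(G)$ whose faces are all subsets of $V(G)$ having a common neighbor (a vertex adjacent to every element of the subset). $\|\Delta\|$ denotes the geometric realization of a simplicial complex $\Delta$. $K_{a,b}$ is the complete bipartite graph with parts of sizes $a$ and $b$. *)

theory Defs
  imports "HOL-Analysis.Analysis"
begin

definition finite_simple_graph :: "'v set \<Rightarrow> ('v \<Rightarrow> 'v \<Rightarrow> bool) \<Rightarrow> bool" where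
  "finite_simple_graph V E \<longleftrightarrow> finite V \<and>
     (\<forall>u v. E u v \<longrightarrow> u \<in> V \<and> v \<in> V) \<and>
     (\<forall>u v. E u v \<longrightarrow> E v u) \<and> (\<forall>v. \<not> E v v)"

definition contains_Kab :: "'v set \<Rightarrow> ('v \<Rightarrow> 'v \<Rightarrow> bool) \<Rightarrow> nat \<Rightarrow> nat \<Rightarrow> bool" where
  "contains_Kab V E a b \<longleftrightarrow> (\<exists>A B. A \<subseteq> V \<and> B \<subseteq> V \<and> A \<inter> B = {} \<and>
     card A = a \<and> card B = b \<and> finite A \<and> finite B \<and> (\<forall>x\<in>A. \<forall>y\<in>B. E x y))"

definition nbhd_complex :: "'v set \<Rightarrow> ('v \<Rightarrow> 'v \<Rightarrow> bool) \<Rightarrow> 'v set set" where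
  "nbhd_complex V E = {\<sigma>. \<sigma> \<subseteq> V \<and> (\<exists>w\<in>V. \<forall>u\<in>\<sigma>. E u w)}"

definition finite_simplicial_complex :: "'v set set \<Rightarrow> bool" where
  "finite_simplicial_complex K \<longleftrightarrow> finite K \<and> (\<forall>\<sigma>\<in>K. finite \<sigma>) \<and>
     (\<forall>\<sigma>\<in>K. \<forall>\<tau>. \<tau> \<subseteq> \<sigma> \<longrightarrow> \<tau> \<in> K)"

text \<open>Dimension at most d, for d = n - 1: every face has at most n vertices.\<close>
definition faces_card_le :: "'v set set \<Rightarrow> nat \<Rightarrow> bool" where
  "faces_card_le K n \<longleftrightarrow> (\<forall>\<sigma>\<in>K. card \<sigma> \<le> n)"

text \<open>Geometric realization of a finite simplicial complex, as a subspace of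
  'v \<Rightarrow> real (product topology): barycentric coordinate functions, nonnegative,
  summing to 1, whose support is a face.\<close>
definition geom_real :: "'v set set \<Rightarrow> ('v \<Rightarrow> real) set" where
  "geom_real K = {x. (\<forall>v. 0 \<le> x v) \<and> {v. x v \<noteq> 0} \<in> K \<and> sum x {v. x v \<noteq> 0} = 1}"

definition strong_deformation_retract_of ::
    "'a::topological_space set \<Rightarrow> 'a set \<Rightarrow> bool" where
  "strong_deformation_retract_of A X \<longleftrightarrow> A \<subseteq> X \<and>
     (\<exists>h :: real \<times> 'a \<Rightarrow> 'a. continuous_on ({0..1} \<times> X) h \<and> h ` ({0..1} \<times> X) \<subseteq> X \<and>
        (\<forall>x\<in>X. h (0, x) = x) \<and> (\<forall>x\<in>X. h (1, x) \<in> A) \<and>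
        (\<forall>t\<in>{0..1}. \<forall>y\<in>A. h (t, y) = y))"

end

theory Submission
  imports Defs
begin


definition mw :: "'v set \<Rightarrow> ('v \<Rightarrow> real) \<Rightarrow> 'v set \<Rightarrow> real" where
  "mw V x \<tau> = max 0 (Min (x ` \<tau>) - Max (insert 0 (x ` (V - \<tau>))))"

lemma mw_nonneg: "0 \<le> mw V x \<tau>"
  by (simp add: mw_def)

lemma cont_coord: "continuous_on S (\<lambda>x::'v\<Rightarrow>real. x a)"
  by (rule continuous_on_subset[OF continuous_on_product_coordinates]) simp

lemma cont_Min:
  assumes "finite T" "T \<noteq> {}"
  shows "continuous_on S (\<lambda>x::'v\<Rightarrow>real. Min (x ` T))"
  using assms
proof (induction T rule: finite_ne_induct)
  case (singleton a)
  then show ?case by (simp add: cont_coord)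
next
  case (insert a F)
  have "(\<lambda>x::'v\<Rightarrow>real. Min (x ` insert a F)) = (\<lambda>x. min (x a) (Min (x ` F)))"
    using insert by (simp add: Min_insert)
  then show ?case using insert by (simp only:) (intro continuous_on_min cont_coord, blast)
qed

lemma cont_Max0:
  assumes "finite T"
  shows "continuous_on S (\<lambda>x::'v\<Rightarrow>real. Max (insert 0 (x ` T)))"
  using assms
proof (induction T rule: finite_induct)
  case empty
  then show ?case by simp
next
  case (insert a F)
  have "(\<lambda>x::'v\<Rightarrow>real. Max (insert 0 (x ` insert a F))) = (\<lambda>x. max (x a) (Max (insert 0 (x ` F))))"
  proof
    fix x :: "'v\<Rightarrow>real"
    have "Max (insert 0 (x ` insert a F)) = Max (insert (x a) (insert 0 (x ` F)))"
      by (simp add: insert_commute)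
    also have "\<dots> = max (x a) (Max (insert 0 (x ` F)))"
      using insert by (subst Max_insert) auto
    finally show "Max (insert 0 (x ` insert a F)) = max (x a) (Max (insert 0 (x ` F)))" .
  qed
  then show ?case using insert by (simp only:) (intro continuous_on_max cont_coord, blast)
qed

lemma cont_mw:
  assumes "finite V" "finite \<tau>" "\<tau> \<noteq> {}"
  shows "continuous_on S (\<lambda>x. mw V x \<tau>)"
  unfolding mw_def
  by (intro continuous_on_max continuous_on_diff continuous_on_const cont_Min cont_Max0) (use assms in auto)

lemma mw_pos_imp:
  assumes "finite V" "\<tau> \<subseteq> V" "\<tau> \<noteq> {}" "mw V x \<tau> > 0"
  shows "\<forall>u\<in>\<tau>. \<forall>w\<in>V-\<tau>. x w < x u" and "\<forall>u\<in>\<tau>. 0 < x u"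
proof -
  have fin: "finite \<tau>" using assms finite_subset by blast
  have lt: "Max (insert 0 (x ` (V - \<tau>))) < Min (x ` \<tau>)"
    using assms(4) unfolding mw_def by (simp add: max_def split: if_splits)
  show "\<forall>u\<in>\<tau>. \<forall>w\<in>V-\<tau>. x w < x u"
  proof (intro ballI)
    fix u w assume u: "u \<in> \<tau>" and w: "w \<in> V - \<tau>"
    have "x w \<le> Max (insert 0 (x ` (V - \<tau>)))" using w assms(1) by simp
    moreover have "Min (x ` \<tau>) \<le> x u" using u fin by simp
    ultimately show "x w < x u" using lt by linarith
  qed
  show "\<forall>u\<in>\<tau>. 0 < x u"
  proof
    fix u assume u: "u \<in> \<tau>"
    have "0 \<le> Max (insert 0 (x ` (V - \<tau>)))" using assms(1) by simp
    moreover have "Min (x ` \<tau>) \<le> x u" using u fin by simp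
    ultimately show "0 < x u" using lt by linarith
  qed
qed

lemma mw_nested:
  assumes "finite V" "\<tau> \<subseteq> V" "\<tau> \<noteq> {}" "mw V x \<tau> > 0"
    "\<rho> \<subseteq> V" "\<rho> \<noteq> {}" "mw V x \<rho> > 0"
  shows "\<tau> \<subseteq> \<rho> \<or> \<rho> \<subseteq> \<tau>"
proof (rule ccontr)
  assume "\<not> (\<tau> \<subseteq> \<rho> \<or> \<rho> \<subseteq> \<tau>)"
  then obtain u w where u: "u \<in> \<tau>" "u \<notin> \<rho>" and w: "w \<in> \<rho>" "w \<notin> \<tau>" by blast
  have "x w < x u" using mw_pos_imp(1)[OF assms(1-4)] u w assms(5) by blast
  moreover have "x u < x w" using mw_pos_imp(1)[OF assms(1) assms(5-7)] u w assms(2) by blast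
  ultimately show False by simp
qed

lemma mw_exists_pos:
  assumes "finite V" "v0 \<in> V" "x v0 > 0"
  shows "\<exists>\<tau>. \<tau> \<subseteq> V \<and> \<tau> \<noteq> {} \<and> mw V x \<tau> > 0"
proof -
  define M where "M = Max (x ` V)"
  define \<tau> where "\<tau> = {u\<in>V. x u = M}"
  have MV: "M \<in> x ` V" unfolding M_def using assms by (intro Max_in) auto
  have ne: "\<tau> \<noteq> {}" using MV unfolding \<tau>_def by auto
  have sub: "\<tau> \<subseteq> V" unfolding \<tau>_def by auto
  have fin: "finite \<tau>" using sub assms(1) finite_subset by blast
  have "x v0 \<le> M" using assms(1,2) unfolding M_def by simp
  then have Mpos: "M > 0" using assms(3) by simp
  have minM: "Min (x ` \<tau>) = M" using ne fin unfolding \<tau>_def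
    by (intro Min_eqI) auto
  have "Max (insert 0 (x ` (V - \<tau>))) < M"
  proof -
    have "\<forall>y\<in>insert 0 (x ` (V - \<tau>)). y < M"
    proof
      fix y assume "y \<in> insert 0 (x ` (V - \<tau>))"
      then consider "y = 0" | w where "w \<in> V" "w \<notin> \<tau>" "y = x w" by auto
      then show "y < M"
      proof cases
        case 1 then show ?thesis using Mpos by simp
      next
        case 2
        have "x w \<le> M" unfolding M_def using 2 assms(1) by simp
        moreover have "x w \<noteq> M" using 2 unfolding \<tau>_def by auto
        ultimately show ?thesis using 2 by simp
      qed
    qed
    then show ?thesis using assms(1) by (subst Max_less_iff) auto
  qed
  then have "mw V x \<tau> > 0" unfolding mw_def using minM by simp
  then show ?thesis using ne sub by blast
qed




lemma chain_W1:
  assumes "finite I" "\<forall>i\<in>I. finite (f i)"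
    and ch: "\<forall>i\<in>I. \<forall>j\<in>I. f i \<subseteq> f j \<or> f j \<subseteq> f i"
    and "\<tau> \<noteq> {}"
  shows "\<exists>v\<in>\<tau>. \<forall>j\<in>I. f j \<subseteq> \<tau> \<longrightarrow> f j \<noteq> \<tau> \<longrightarrow> v \<notin> f j"
proof (cases "{j\<in>I. f j \<subseteq> \<tau> \<and> f j \<noteq> \<tau>} = {}")
  case True
  then show ?thesis using assms(4) by blast
next
  case False
  define P where "P = {j\<in>I. f j \<subseteq> \<tau> \<and> f j \<noteq> \<tau>}"
  have finP: "finite P" using assms(1) unfolding P_def by simp
  have "Max ((\<lambda>k. card (f k)) ` P) \<in> (\<lambda>k. card (f k)) ` P"
    by (rule Max_in) (use finP False in \<open>auto simp: P_def\<close>)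
  then obtain jm where jm1: "jm \<in> P" and eqm: "card (f jm) = Max ((\<lambda>k. card (f k)) ` P)" by auto
  have jm: "jm \<in> P" "\<forall>k\<in>P. card (f k) \<le> card (f jm)"
    using jm1 eqm finP by auto
  have allsub: "\<forall>k\<in>P. f k \<subseteq> f jm"
  proof
    fix k assume k: "k \<in> P"
    have "f k \<subseteq> f jm \<or> f jm \<subseteq> f k" using ch k jm(1) unfolding P_def by blast
    moreover have "f k \<subseteq> f jm" if h: "f jm \<subseteq> f k"
    proof -
      have fk: "finite (f k)" using assms(2) k unfolding P_def by blast
      have "card (f jm) \<le> card (f k)" using card_mono[OF fk h] .
      moreover have "card (f k) \<le> card (f jm)" using jm(2) k by blast
      ultimately have "card (f jm) = card (f k)" by simp
      then have "f jm = f k" using card_subset_eq[OF fk h] by simp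
      then show ?thesis by simp
    qed
    ultimately show "f k \<subseteq> f jm" by blast
  qed
  have "f jm \<subset> \<tau>" using jm(1) unfolding P_def by blast
  then obtain v where v: "v \<in> \<tau>" "v \<notin> f jm" by blast
  have "\<forall>j\<in>I. f j \<subseteq> \<tau> \<longrightarrow> f j \<noteq> \<tau> \<longrightarrow> v \<notin> f j"
    using allsub v(2) unfolding P_def by blast
  then show ?thesis using v(1) by blast
qed

lemma chain_W2:
  assumes "finite I" "\<forall>i\<in>I. finite (f i)"
    and ch: "\<forall>i\<in>I. \<forall>j\<in>I. f i \<subseteq> f j \<or> f j \<subseteq> f i"
    and Q: "{j\<in>I. \<not> f j \<subseteq> \<tau>} \<noteq> {}"
  shows "\<exists>w. w \<notin> \<tau> \<and> (\<exists>j\<in>I. w \<in> f j) \<and> (\<forall>j\<in>I. \<not> f j \<subseteq> \<tau> \<longrightarrow> w \<in> f j)"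
proof -
  define Q where "Q = {j\<in>I. \<not> f j \<subseteq> \<tau>}"
  have finQ: "finite Q" using assms(1) unfolding Q_def by simp
  have "Min ((\<lambda>k. card (f k)) ` Q) \<in> (\<lambda>k. card (f k)) ` Q"
    by (rule Min_in) (use finQ Q in \<open>auto simp: Q_def\<close>)
  then obtain j0 where j01: "j0 \<in> Q" and eq0: "card (f j0) = Min ((\<lambda>k. card (f k)) ` Q)" by auto
  have j0: "j0 \<in> Q" "\<forall>k\<in>Q. card (f j0) \<le> card (f k)"
    using j01 eq0 finQ by auto
  have allsup: "\<forall>k\<in>Q. f j0 \<subseteq> f k"
  proof
    fix k assume k: "k \<in> Q"
    have "f k \<subseteq> f j0 \<or> f j0 \<subseteq> f k" using ch k j0(1) unfolding Q_def by blast
    moreover have "f j0 \<subseteq> f k" if h: "f k \<subseteq> f j0"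
    proof -
      have fk: "finite (f j0)" using assms(2) j0(1) unfolding Q_def by blast
      have "card (f k) \<le> card (f j0)" using card_mono[OF fk h] .
      moreover have "card (f j0) \<le> card (f k)" using j0(2) k by blast
      ultimately have "card (f j0) = card (f k)" by simp
      then have "f k = f j0" using card_subset_eq[OF fk h] by simp
      then show ?thesis by simp
    qed
    ultimately show "f j0 \<subseteq> f k" by blast
  qed
  obtain w where w: "w \<in> f j0" "w \<notin> \<tau>" using j0(1) unfolding Q_def by blast
  show ?thesis using w allsup j0(1) unfolding Q_def by blast
qed




lemma chain_mw_a:
  assumes finV: "finite V" and finI: "finite I"
    and inj: "inj_on f I"
    and sub: "\<forall>i\<in>I. f i \<subseteq> V \<and> f i \<noteq> {}"
    and ch: "\<forall>i\<in>I. \<forall>j\<in>I. f i \<subseteq> f j \<or> f j \<subseteq> f i"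
    and s: "\<forall>i\<in>I. 0 \<le> s i"
    and y: "\<forall>v. y v = sum s {j\<in>I. v \<in> f j}"
    and i: "i \<in> I"
  shows "mw V y (f i) = s i"
proof -
  have finf: "\<forall>i\<in>I. finite (f i)" using sub finV finite_subset by blast
  define U where "U = sum s {j\<in>I. f i \<subseteq> f j}"
  define U' where "U' = sum s {j\<in>I. f i \<subseteq> f j \<and> j \<noteq> i}"
  have finfi: "finite (f i)" using finf i by blast
  have nefi: "f i \<noteq> {}" using sub i by blast
  have Umin: "Min (y ` f i) = U"
  proof (rule antisym)
    obtain v where v: "v \<in> f i" "\<forall>j\<in>I. f j \<subseteq> f i \<longrightarrow> f j \<noteq> f i \<longrightarrow> v \<notin> f j"
      using chain_W1[OF finI finf ch nefi] by blast
    have "{j\<in>I. v \<in> f j} = {j\<in>I. f i \<subseteq> f j}"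
    proof
      show "{j\<in>I. v \<in> f j} \<subseteq> {j\<in>I. f i \<subseteq> f j}"
      proof
        fix j assume j: "j \<in> {j\<in>I. v \<in> f j}"
        then have "f i \<subseteq> f j \<or> f j \<subseteq> f i" using ch i by blast
        then show "j \<in> {j\<in>I. f i \<subseteq> f j}" using v j by blast
      qed
      show "{j\<in>I. f i \<subseteq> f j} \<subseteq> {j\<in>I. v \<in> f j}" using v(1) by blast
    qed
    then have "y v = U" using y unfolding U_def by simp
    then show "Min (y ` f i) \<le> U" using v(1) finfi by (metis Min_le finite_imageI image_eqI)
    show "U \<le> Min (y ` f i)"
    proof (subst Min_ge_iff)
      show "finite (y ` f i)" using finfi by simp
      show "y ` f i \<noteq> {}" using nefi by simp
      show "\<forall>a\<in>y ` f i. U \<le> a"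
      proof
        fix a assume "a \<in> y ` f i"
        then obtain u where u: "u \<in> f i" "a = y u" by blast
        have "U \<le> sum s {j\<in>I. u \<in> f j}" unfolding U_def
          by (rule sum_mono2) (use finI s u in auto)
        then show "U \<le> a" using u y by simp
      qed
    qed
  qed
  have Umax: "Max (insert 0 (y ` (V - f i))) = U'"
  proof (rule antisym)
    show "Max (insert 0 (y ` (V - f i))) \<le> U'"
    proof (subst Max_le_iff)
      show "finite (insert 0 (y ` (V - f i)))" using finV by simp
      show "insert 0 (y ` (V - f i)) \<noteq> {}" by simp
      show "\<forall>a\<in>insert 0 (y ` (V - f i)). a \<le> U'"
      proof
        fix a assume a: "a \<in> insert 0 (y ` (V - f i))"
        have U'0: "0 \<le> U'" unfolding U'_def using s by (intro sum_nonneg) auto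
        show "a \<le> U'"
        proof (cases "a = 0")
          case True then show ?thesis using U'0 by simp
        next
          case False
          then obtain w where w: "w \<in> V" "w \<notin> f i" "a = y w" using a by blast
          have "{j\<in>I. w \<in> f j} \<subseteq> {j\<in>I. f i \<subseteq> f j \<and> j \<noteq> i}"
          proof
            fix j assume j: "j \<in> {j\<in>I. w \<in> f j}"
            then have "f i \<subseteq> f j \<or> f j \<subseteq> f i" using ch i by blast
            then show "j \<in> {j\<in>I. f i \<subseteq> f j \<and> j \<noteq> i}" using w j by blast
          qed
          then have "sum s {j\<in>I. w \<in> f j} \<le> U'" unfolding U'_def
            by (intro sum_mono2) (use finI s in auto)
          then show ?thesis using w y by simp
        qed
      qed
    qed
    show "U' \<le> Max (insert 0 (y ` (V - f i)))"
    proof (cases "{j\<in>I. \<not> f j \<subseteq> f i} = {}")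
      case True
      then have "{j\<in>I. f i \<subseteq> f j \<and> j \<noteq> i} = {}"
        using inj i unfolding inj_on_def by blast
      then have "U' = 0" unfolding U'_def by (simp only: sum.empty)
      then show ?thesis using finV by simp
    next
      case False
      obtain w where w: "w \<notin> f i" "\<exists>j\<in>I. w \<in> f j" "\<forall>j\<in>I. \<not> f j \<subseteq> f i \<longrightarrow> w \<in> f j"
        using chain_W2[OF finI finf ch False] by blast
      have wV: "w \<in> V" using w(2) sub by blast
      have "{j\<in>I. f i \<subseteq> f j \<and> j \<noteq> i} \<subseteq> {j\<in>I. w \<in> f j}"
      proof
        fix j assume j: "j \<in> {j\<in>I. f i \<subseteq> f j \<and> j \<noteq> i}"
        then have "f j \<noteq> f i" using inj i unfolding inj_on_def by blast
        then have "\<not> f j \<subseteq> f i" using j by blast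
        then show "j \<in> {j\<in>I. w \<in> f j}" using w(3) j by blast
      qed
      then have "U' \<le> y w" unfolding U'_def using y
        by (simp, intro sum_mono2) (use finI s in auto)
      also have "y w \<le> Max (insert 0 (y ` (V - f i)))"
        using wV w(1) finV by simp
      finally show ?thesis .
    qed
  qed
  have "{j\<in>I. f i \<subseteq> f j} = insert i {j\<in>I. f i \<subseteq> f j \<and> j \<noteq> i}" using i by blast
  then have "U = s i + U'" unfolding U_def U'_def using finI by simp
  then show ?thesis unfolding mw_def using Umin Umax s i by simp
qed

lemma chain_mw_b:
  assumes finV: "finite V" and finI: "finite I"
    and sub: "\<forall>i\<in>I. f i \<subseteq> V \<and> f i \<noteq> {}"
    and ch: "\<forall>i\<in>I. \<forall>j\<in>I. f i \<subseteq> f j \<or> f j \<subseteq> f i"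
    and s: "\<forall>i\<in>I. 0 \<le> s i"
    and y: "\<forall>v. y v = sum s {j\<in>I. v \<in> f j}"
    and tau: "\<tau> \<subseteq> V" "\<tau> \<noteq> {}" "\<tau> \<notin> f ` I"
  shows "mw V y \<tau> = 0"
proof -
  have finf: "\<forall>i\<in>I. finite (f i)" using sub finV finite_subset by blast
  have fint: "finite \<tau>" using tau finV finite_subset by blast
  obtain v where v: "v \<in> \<tau>" "\<forall>j\<in>I. f j \<subseteq> \<tau> \<longrightarrow> f j \<noteq> \<tau> \<longrightarrow> v \<notin> f j"
    using chain_W1[OF finI finf ch tau(2)] by blast
  have vQ: "{j\<in>I. v \<in> f j} \<subseteq> {j\<in>I. \<not> f j \<subseteq> \<tau>}"
    using v tau(3) by blast
  have "y v \<le> Max (insert 0 (y ` (V - \<tau>)))"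
  proof (cases "{j\<in>I. \<not> f j \<subseteq> \<tau>} = {}")
    case True
    then have "{j\<in>I. v \<in> f j} = {}" using vQ by blast
    then have "y v = 0" using y by (simp only: sum.empty)
    then show ?thesis using finV by simp
  next
    case False
    obtain w where w: "w \<notin> \<tau>" "\<exists>j\<in>I. w \<in> f j" "\<forall>j\<in>I. \<not> f j \<subseteq> \<tau> \<longrightarrow> w \<in> f j"
      using chain_W2[OF finI finf ch False] by blast
    have wV: "w \<in> V" using w(2) sub by blast
    have "{j\<in>I. v \<in> f j} \<subseteq> {j\<in>I. w \<in> f j}" using vQ w(3) by blast
    then have "y v \<le> y w" using y by (simp, intro sum_mono2) (use finI s in auto)
    also have "y w \<le> Max (insert 0 (y ` (V - \<tau>)))" using wV w(1) finV by simp
    finally show ?thesis .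
  qed
  moreover have "Min (y ` \<tau>) \<le> y v" using v(1) fint by simp
  ultimately show ?thesis unfolding mw_def by simp
qed




definition Nb :: "'v set \<Rightarrow> ('v \<Rightarrow> 'v \<Rightarrow> bool) \<Rightarrow> 'v set \<Rightarrow> 'v set" where
  "Nb V E S = {w\<in>V. \<forall>u\<in>S. E u w}"

definition cl :: "'v set \<Rightarrow> ('v \<Rightarrow> 'v \<Rightarrow> bool) \<Rightarrow> 'v set \<Rightarrow> 'v set" where
  "cl V E S = Nb V E (Nb V E S)"

definition CF :: "'v set \<Rightarrow> ('v \<Rightarrow> 'v \<Rightarrow> bool) \<Rightarrow> 'v set set" where
  "CF V E = {\<sigma>. \<sigma> \<subseteq> V \<and> \<sigma> \<noteq> {} \<and> Nb V E \<sigma> \<noteq> {} \<and> cl V E \<sigma> = \<sigma>}"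

lemma Nb_sub: "Nb V E S \<subseteq> V" unfolding Nb_def by auto

lemma Nb_anti: "S \<subseteq> T \<Longrightarrow> Nb V E T \<subseteq> Nb V E S" unfolding Nb_def by auto

lemma cl_sup:
  assumes "\<forall>u v. E u v \<longrightarrow> E v u" "S \<subseteq> V"
  shows "S \<subseteq> cl V E S"
  using assms unfolding cl_def Nb_def by auto

lemma cl_mono: "S \<subseteq> T \<Longrightarrow> cl V E S \<subseteq> cl V E T"
  unfolding cl_def by (rule Nb_anti, rule Nb_anti, assumption)

lemma Nb_cl:
  assumes "\<forall>u v. E u v \<longrightarrow> E v u" "S \<subseteq> V"
  shows "Nb V E (cl V E S) = Nb V E S"
proof
  show "Nb V E (cl V E S) \<subseteq> Nb V E S" using cl_sup[OF assms] by (rule Nb_anti)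
  show "Nb V E S \<subseteq> Nb V E (cl V E S)"
    using cl_sup[OF assms(1) Nb_sub[of V E S]] unfolding cl_def .
qed

lemma cl_CF:
  assumes "\<forall>u v. E u v \<longrightarrow> E v u" "S \<subseteq> V" "S \<noteq> {}" "Nb V E S \<noteq> {}"
  shows "cl V E S \<in> CF V E"
proof -
  have "S \<subseteq> cl V E S" using cl_sup assms by blast
  moreover have "cl V E S \<subseteq> V" unfolding cl_def by (rule Nb_sub)
  moreover have "Nb V E (cl V E S) = Nb V E S" using Nb_cl assms by blast
  ultimately show ?thesis unfolding CF_def using assms by (auto simp: cl_def)
qed

lemma inj_card_chain:
  assumes "\<forall>x\<in>F. finite x" "\<forall>x\<in>F. \<forall>y\<in>F. x \<subseteq> y \<or> y \<subseteq> x"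
  shows "inj_on card F"
proof (rule inj_onI)
  fix x y assume xy: "x \<in> F" "y \<in> F" "card x = card y"
  show "x = y"
  proof (cases "x \<subseteq> y")
    case True then show ?thesis using card_subset_eq[OF _ True] assms(1) xy by simp
  next
    case False then have "y \<subseteq> x" using assms(2) xy by blast
    then show ?thesis using card_subset_eq[OF _ \<open>y \<subseteq> x\<close>] assms(1) xy by simp
  qed
qed

lemma chain_card_bound:
  assumes fsg: "finite_simple_graph V E" and noK: "\<not> contains_Kab V E a b"
    and ab: "a \<ge> 1" "b \<ge> 1"
    and FC: "F \<subseteq> CF V E" and ch: "\<forall>x\<in>F. \<forall>y\<in>F. x \<subseteq> y \<or> y \<subseteq> x"
  shows "card F \<le> a + b - 2"
proof -
  have finV: "finite V" and sym: "\<forall>u v. E u v \<longrightarrow> E v u" and irr: "\<forall>v. \<not> E v v"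
    using fsg unfolding finite_simple_graph_def by auto
  have FV: "\<forall>x\<in>F. x \<subseteq> V \<and> x \<noteq> {} \<and> Nb V E x \<noteq> {} \<and> cl V E x = x"
    using FC unfolding CF_def by blast
  have finx: "\<forall>x\<in>F. finite x" using FV finV finite_subset by blast
  have finF: "finite F"
  proof -
    have "F \<subseteq> Pow V" using FV by blast
    then show ?thesis using finite_subset[of F "Pow V"] finV by simp
  qed
  define F1 where "F1 = {x\<in>F. card x < a}"
  define F2 where "F2 = {x\<in>F. a \<le> card x}"
  have F12: "F = F1 \<union> F2" "F1 \<inter> F2 = {}" unfolding F1_def F2_def by auto
  have c1: "card F1 \<le> a - 1"
  proof -
    have inj: "inj_on card F1" using inj_card_chain[of F1] finx ch unfolding F1_def by auto
    have "card ` F1 \<subseteq> {1..<a}"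
    proof
      fix k assume "k \<in> card ` F1"
      then obtain x where x: "x \<in> F" "card x < a" "k = card x" unfolding F1_def by blast
      have "card x \<noteq> 0" using x(1) FV finx by auto
      then show "k \<in> {1..<a}" using x by auto
    qed
    then have "card (card ` F1) \<le> card {1..<a}" by (intro card_mono) auto
    then show ?thesis using card_image[OF inj] by simp
  qed
  show ?thesis
  proof (cases "F2 = {}")
    case True
    then have "card F = card F1" using F12 by simp
    then show ?thesis using c1 ab by simp
  next
    case False
    have finF2: "finite F2" using finF unfolding F2_def by simp
    have "Min (card ` F2) \<in> card ` F2" by (rule Min_in) (use finF2 False in auto)
    then obtain s0 where s01: "s0 \<in> F2" and eq0: "card s0 = Min (card ` F2)" by auto
    have s0min: "\<forall>x\<in>F2. card s0 \<le> card x" using eq0 finF2 by simp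
    have s0sub: "\<forall>x\<in>F2. s0 \<subseteq> x"
    proof
      fix x assume x: "x \<in> F2"
      have "x \<subseteq> s0 \<or> s0 \<subseteq> x" using ch x s01 unfolding F2_def by blast
      moreover have "s0 \<subseteq> x" if h: "x \<subseteq> s0"
      proof -
        have fs0: "finite s0" using finx s01 unfolding F2_def by blast
        have "card x \<le> card s0" using card_mono[OF fs0 h] .
        moreover have "card s0 \<le> card x" using s0min x by blast
        ultimately have "card x = card s0" by simp
        then have "x = s0" using card_subset_eq[OF fs0 h] by simp
        then show ?thesis by simp
      qed
      ultimately show "s0 \<subseteq> x" by blast
    qed
    define N0 where "N0 = Nb V E s0"
    have s0F: "s0 \<in> F" "a \<le> card s0" using s01 unfolding F2_def by auto
    have finN0: "finite N0" unfolding N0_def using finite_subset[OF Nb_sub finV] .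
    have cN0: "card N0 < b"
    proof (rule ccontr)
      assume "\<not> card N0 < b"
      then have "b \<le> card N0" by simp
      then obtain B where B: "B \<subseteq> N0" "card B = b" "finite B" by (rule obtain_subset_with_card_n)
      obtain A where A: "A \<subseteq> s0" "card A = a" "finite A" using s0F(2) by (rule obtain_subset_with_card_n)
      have AV: "A \<subseteq> V" using A(1) FV s0F(1) by blast
      have BV: "B \<subseteq> V" using B(1) Nb_sub[of V E s0] unfolding N0_def by blast
      have AB: "\<forall>x\<in>A. \<forall>y\<in>B. E x y" using A(1) B(1) unfolding N0_def Nb_def by blast
      have disj: "A \<inter> B = {}"
      proof (rule ccontr)
        assume "A \<inter> B \<noteq> {}"
        then obtain z where "z \<in> A" "z \<in> B" by blast
        then have "E z z" using AB by blast
        then show False using irr by blast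
      qed
      have "contains_Kab V E a b"
        unfolding contains_Kab_def using AV BV AB disj A(2,3) B(2,3) by blast
      then show False using noK by simp
    qed
    have c2: "card F2 \<le> card N0"
    proof -
      have inj: "inj_on (\<lambda>x. card (Nb V E x)) F2"
      proof (rule inj_onI)
        fix x y assume xy: "x \<in> F2" "y \<in> F2" "card (Nb V E x) = card (Nb V E y)"
        have fx: "finite (Nb V E x)" "finite (Nb V E y)" using finite_subset[OF Nb_sub finV] by auto
        have "x \<subseteq> y \<or> y \<subseteq> x" using ch xy(1,2) unfolding F2_def by blast
        then have "Nb V E x \<subseteq> Nb V E y \<or> Nb V E y \<subseteq> Nb V E x"
          using Nb_anti by blast
        then have "Nb V E x = Nb V E y"
        proof
          assume h: "Nb V E x \<subseteq> Nb V E y"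
          show ?thesis using card_subset_eq[OF fx(2) h] xy(3) by simp
        next
          assume h: "Nb V E y \<subseteq> Nb V E x"
          show ?thesis using card_subset_eq[OF fx(1) h] xy(3) by simp
        qed
        then have "cl V E x = cl V E y" unfolding cl_def by simp
        then show "x = y" using FV xy(1,2) unfolding F2_def by auto
      qed
      have "(\<lambda>x. card (Nb V E x)) ` F2 \<subseteq> {1..card N0}"
      proof
        fix k assume "k \<in> (\<lambda>x. card (Nb V E x)) ` F2"
        then obtain x where x: "x \<in> F2" "k = card (Nb V E x)" by blast
        have sub: "Nb V E x \<subseteq> N0" unfolding N0_def using s0sub x(1) Nb_anti by blast
        have "Nb V E x \<noteq> {}" using FV x(1) unfolding F2_def by blast
        then have "card (Nb V E x) \<noteq> 0" using finite_subset[OF Nb_sub finV] by auto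
        moreover have "card (Nb V E x) \<le> card N0" using card_mono[OF finN0 sub] .
        ultimately show "k \<in> {1..card N0}" using x by auto
      qed
      then have "card ((\<lambda>x. card (Nb V E x)) ` F2) \<le> card {1..card N0}" by (intro card_mono) auto
      then show ?thesis using card_image[OF inj] by simp
    qed
    have "card F = card F1 + card F2"
    proof -
      have "finite F1" "finite F2" using finF F12(1) by auto
      then show ?thesis using F12 card_Un_disjoint by simp
    qed
    then show ?thesis using c1 c2 cN0 ab by linarith
  qed
qed




lemma chain_top:
  assumes "finite I" "I \<noteq> {}" "\<forall>i\<in>I. finite (f i)"
    and ch: "\<forall>i\<in>I. \<forall>j\<in>I. f i \<subseteq> f j \<or> f j \<subseteq> f i"
  shows "\<exists>i\<in>I. \<forall>j\<in>I. f j \<subseteq> f i"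
proof -
  have "Max ((\<lambda>k. card (f k)) ` I) \<in> (\<lambda>k. card (f k)) ` I"
    by (rule Max_in) (use assms in auto)
  then obtain jm where jm1: "jm \<in> I" and eqm: "card (f jm) = Max ((\<lambda>k. card (f k)) ` I)" by auto
  have jm: "\<forall>k\<in>I. card (f k) \<le> card (f jm)"
    using eqm assms(1) by auto
  have "\<forall>k\<in>I. f k \<subseteq> f jm"
  proof
    fix k assume k: "k \<in> I"
    have "f k \<subseteq> f jm \<or> f jm \<subseteq> f k" using ch k jm1 by blast
    moreover have "f k \<subseteq> f jm" if h: "f jm \<subseteq> f k"
    proof -
      have fk: "finite (f k)" using assms(3) k by blast
      have "card (f jm) \<le> card (f k)" using card_mono[OF fk h] .
      moreover have "card (f k) \<le> card (f jm)" using jm k by blast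
      ultimately have "card (f jm) = card (f k)" by simp
      then have "f jm = f k" using card_subset_eq[OF fk h] by simp
      then show ?thesis by simp
    qed
    ultimately show "f k \<subseteq> f jm" by blast
  qed
  then show ?thesis using jm1 by blast
qed

lemma sum_supp:
  fixes x :: "'v \<Rightarrow> real"
  assumes "finite V" "\<forall>v. v \<notin> V \<longrightarrow> x v = 0"
  shows "sum x {v. x v \<noteq> 0} = sum x V"
  by (rule sum.mono_neutral_left) (use assms in auto)

definition bary :: "'v set \<Rightarrow> 'v \<Rightarrow> real" where
  "bary \<sigma> v = (if v \<in> \<sigma> then 1 / real (card \<sigma>) else 0)"

lemma sum_bary:
  assumes "finite V" "\<sigma> \<subseteq> V" "\<sigma> \<noteq> {}"
  shows "sum (bary \<sigma>) V = 1"
proof -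
  have fs: "finite \<sigma>" using assms finite_subset by blast
  have "sum (bary \<sigma>) V = sum (\<lambda>v. 1 / real (card \<sigma>)) {v\<in>V. v \<in> \<sigma>}"
    unfolding bary_def using assms(1) by (simp only: sum.inter_filter)
  also have "{v\<in>V. v \<in> \<sigma>} = \<sigma>" using assms(2) by blast
  also have "sum (\<lambda>v. 1 / real (card \<sigma>)) \<sigma> = 1" using fs assms(3) by simp
  finally show ?thesis .
qed

locale nbsetup =
  fixes V :: "'v set" and E :: "'v \<Rightarrow> 'v \<Rightarrow> bool" and e :: "nat \<Rightarrow> 'v set" and n :: nat
  assumes fsg: "finite_simple_graph V E"
    and bij: "bij_betw e {..<n} (CF V E)"
begin

lemma finV: "finite V" and sym: "\<forall>u v. E u v \<longrightarrow> E v u" and irr: "\<forall>v. \<not> E v v"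
  using fsg unfolding finite_simple_graph_def by auto

lemma e_CF: "i < n \<Longrightarrow> e i \<in> CF V E"
  using bij unfolding bij_betw_def by auto

lemma e_props: "i < n \<Longrightarrow> e i \<subseteq> V \<and> e i \<noteq> {} \<and> Nb V E (e i) \<noteq> {} \<and> cl V E (e i) = e i"
  using e_CF unfolding CF_def by blast

lemma e_inj: "inj_on e {..<n}"
  using bij unfolding bij_betw_def by auto

lemma e_fin: "i < n \<Longrightarrow> finite (e i)"
  using e_props finV finite_subset by blast

lemma e_card: "i < n \<Longrightarrow> card (e i) > 0"
  using e_props e_fin by (simp add: card_gt_0_iff)

lemma CF_e: "\<sigma> \<in> CF V E \<Longrightarrow> \<exists>i<n. e i = \<sigma>"
  using bij unfolding bij_betw_def by (metis imageE lessThan_iff)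

definition KK :: "nat set set" where
  "KK = {I. I \<subseteq> {..<n} \<and> (\<forall>i\<in>I. \<forall>j\<in>I. e i \<subseteq> e j \<or> e j \<subseteq> e i)}"

definition phi :: "(nat \<Rightarrow> real) \<Rightarrow> 'v \<Rightarrow> real" where
  "phi t = (\<lambda>v. \<Sum>i<n. t i * bary (e i) v)"

definition TT :: "'v set set" where
  "TT = {\<tau>. \<tau> \<subseteq> V \<and> \<tau> \<noteq> {}}"

lemma TT_fin: "finite TT"
proof -
  have "TT \<subseteq> Pow V" unfolding TT_def by blast
  then show ?thesis using finite_subset[of TT "Pow V"] finV by simp
qed

definition rho0 :: "('v \<Rightarrow> real) \<Rightarrow> nat \<Rightarrow> real" where
  "rho0 x i = (\<Sum>\<tau>\<in>{\<tau>\<in>TT. cl V E \<tau> = e i}. real (card \<tau>) * mw V x \<tau>)"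

definition DD :: "('v \<Rightarrow> real) \<Rightarrow> real" where
  "DD x = (\<Sum>i<n. rho0 x i)"

definition rho :: "('v \<Rightarrow> real) \<Rightarrow> nat \<Rightarrow> real" where
  "rho x = (\<lambda>i. if i < n then rho0 x i / DD x else 0)"

definition psi :: "('v \<Rightarrow> real) \<Rightarrow> nat \<Rightarrow> real" where
  "psi y = (\<lambda>i. if i < n then real (card (e i)) * mw V y (e i) else 0)"

definition XX :: "('v \<Rightarrow> real) set" where
  "XX = geom_real (nbhd_complex V E)"

lemma KK_props:
  assumes "t \<in> geom_real KK"
  shows "\<forall>i. 0 \<le> t i" "\<forall>i. n \<le> i \<longrightarrow> t i = 0" "sum t {..<n} = 1"
    "{i. t i \<noteq> 0} \<in> KK"
proof -
  show "\<forall>i. 0 \<le> t i" "{i. t i \<noteq> 0} \<in> KK" using assms unfolding geom_real_def by auto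
  then show n0: "\<forall>i. n \<le> i \<longrightarrow> t i = 0" unfolding KK_def by auto
  have "sum t {i. t i \<noteq> 0} = 1" using assms unfolding geom_real_def by auto
  moreover have "sum t {i. t i \<noteq> 0} = sum t {..<n}"
    by (rule sum.mono_neutral_left) (use n0 in \<open>auto simp: not_less, meson not_less\<close>)
  ultimately show "sum t {..<n} = 1" by simp
qed

lemma phi_chain:
  assumes "t \<in> geom_real KK"
  defines "S \<equiv> {i. t i \<noteq> 0}"
  shows "\<forall>v. phi t v = sum (\<lambda>i. t i / real (card (e i))) {j\<in>S. v \<in> e j}"
proof
  fix v
  have KP: "\<forall>i. 0 \<le> t i" "\<forall>i. n \<le> i \<longrightarrow> t i = 0" "S \<in> KK"
    using KK_props[OF assms(1)] unfolding S_def by auto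
  have Sn: "S \<subseteq> {..<n}" using KP(3) unfolding KK_def by blast
  have finS: "finite S" using Sn finite_subset by blast
  have "phi t v = (\<Sum>i\<in>S. t i * bary (e i) v)"
    unfolding phi_def by (rule sum.mono_neutral_right) (use Sn in \<open>auto simp: S_def\<close>)
  also have "\<dots> = (\<Sum>i\<in>S. if v \<in> e i then t i / real (card (e i)) else 0)"
    by (rule sum.cong) (auto simp: bary_def)
  also have "\<dots> = sum (\<lambda>i. t i / real (card (e i))) {j\<in>S. v \<in> e j}"
    using finS by (simp add: sum.inter_filter)
  finally show "phi t v = sum (\<lambda>i. t i / real (card (e i))) {j\<in>S. v \<in> e j}" .
qed

lemma phi_mw:
  assumes t: "t \<in> geom_real KK"
  shows "\<And>i. i < n \<Longrightarrow> mw V (phi t) (e i) = t i / real (card (e i))"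
    and "\<And>\<tau>. \<tau> \<in> TT \<Longrightarrow> \<tau> \<notin> CF V E \<Longrightarrow> mw V (phi t) \<tau> = 0"
proof -
  define S where "S = {i. t i \<noteq> 0}"
  have KP: "\<forall>i. 0 \<le> t i" "\<forall>i. n \<le> i \<longrightarrow> t i = 0" "S \<in> KK"
    using KK_props[OF t] unfolding S_def by auto
  have Sn: "S \<subseteq> {..<n}" using KP(3) unfolding KK_def by blast
  have finS: "finite S" using Sn finite_subset by blast
  have injS: "inj_on e S" using e_inj Sn inj_on_subset by blast
  have subS: "\<forall>i\<in>S. e i \<subseteq> V \<and> e i \<noteq> {}" using Sn e_props by blast
  have chS: "\<forall>i\<in>S. \<forall>j\<in>S. e i \<subseteq> e j \<or> e j \<subseteq> e i" using KP(3) unfolding KK_def by blast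
  have sS: "\<forall>i\<in>S. 0 \<le> t i / real (card (e i))" using KP(1) by simp
  have y: "\<forall>v. phi t v = sum (\<lambda>i. t i / real (card (e i))) {j\<in>S. v \<in> e j}"
    using phi_chain[OF t] unfolding S_def by simp
  note A = chain_mw_a[OF finV finS injS subS chS sS y]
  note B = chain_mw_b[OF finV finS subS chS sS y]
  show "mw V (phi t) \<tau> = 0" if "\<tau> \<in> TT" "\<tau> \<notin> CF V E" for \<tau>
  proof -
    have "\<tau> \<notin> e ` S" using that Sn e_CF by blast
    then show ?thesis using B that unfolding TT_def by blast
  qed
  show "mw V (phi t) (e i) = t i / real (card (e i))" if i: "i < n" for i
  proof (cases "i \<in> S")
    case True then show ?thesis using A by blast
  next
    case False
    then have ti: "t i = 0" unfolding S_def by simp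
    have "e i \<notin> e ` S" using False e_inj Sn i unfolding inj_on_def by blast
    then have "mw V (phi t) (e i) = 0" using B e_props[OF i] by blast
    then show ?thesis using ti by simp
  qed
qed

lemma psi_phi:
  assumes t: "t \<in> geom_real KK"
  shows "psi (phi t) = t"
proof
  fix i
  show "psi (phi t) i = t i"
  proof (cases "i < n")
    case True
    then show ?thesis unfolding psi_def using phi_mw(1)[OF t True] e_card[OF True] by simp
  next
    case False
    then show ?thesis unfolding psi_def using KK_props(2)[OF t] by simp
  qed
qed

lemma rho0_phi:
  assumes t: "t \<in> geom_real KK" and i: "i < n"
  shows "rho0 (phi t) i = t i"
proof -
  have eiT: "e i \<in> {\<tau>\<in>TT. cl V E \<tau> = e i}" using e_props[OF i] unfolding TT_def by auto
  have "rho0 (phi t) i = (\<Sum>\<tau>\<in>{\<tau>\<in>TT. cl V E \<tau> = e i}. if \<tau> = e i then t i else 0)"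
    unfolding rho0_def
  proof (rule sum.cong)
    fix \<tau> assume tau: "\<tau> \<in> {\<tau>\<in>TT. cl V E \<tau> = e i}"
    show "real (card \<tau>) * mw V (phi t) \<tau> = (if \<tau> = e i then t i else 0)"
    proof (cases "\<tau> = e i")
      case True
      then show ?thesis using phi_mw(1)[OF t i] e_card[OF i] by simp
    next
      case False
      have "\<tau> \<notin> CF V E" using tau False unfolding CF_def by auto
      then show ?thesis using phi_mw(2)[OF t] tau False by simp
    qed
  qed simp
  also have "\<dots> = t i" using eiT TT_fin by simp
  finally show ?thesis .
qed

lemma DD_phi:
  assumes t: "t \<in> geom_real KK"
  shows "DD (phi t) = 1"
  unfolding DD_def using rho0_phi[OF t] KK_props(3)[OF t] by simp

lemma rho_phi:
  assumes t: "t \<in> geom_real KK"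
  shows "rho (phi t) = t"
proof
  fix i show "rho (phi t) i = t i"
    unfolding rho_def using rho0_phi[OF t] DD_phi[OF t] KK_props(2)[OF t] by (auto simp: not_less)
qed

end




context nbsetup begin

lemma XX_props:
  assumes "x \<in> XX"
  shows "\<forall>v. 0 \<le> x v" "{v. x v \<noteq> 0} \<subseteq> V" "\<forall>v. v \<notin> V \<longrightarrow> x v = 0"
    "Nb V E {v. x v \<noteq> 0} \<noteq> {}" "sum x V = 1"
proof -
  have h: "\<forall>v. 0 \<le> x v" "{v. x v \<noteq> 0} \<subseteq> V" "\<exists>w\<in>V. \<forall>u\<in>{v. x v \<noteq> 0}. E u w"
    "sum x {v. x v \<noteq> 0} = 1"
    using assms unfolding XX_def geom_real_def nbhd_complex_def by auto
  show "\<forall>v. 0 \<le> x v" "{v. x v \<noteq> 0} \<subseteq> V" using h by auto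
  show "Nb V E {v. x v \<noteq> 0} \<noteq> {}" using h(3) unfolding Nb_def by blast
  show vn: "\<forall>v. v \<notin> V \<longrightarrow> x v = 0" using h(2) by blast
  show "sum x V = 1" using h(4) sum_supp[OF finV vn] by simp
qed

lemma XX_intro:
  assumes "\<forall>v. 0 \<le> x v" "\<sigma> \<subseteq> V" "Nb V E \<sigma> \<noteq> {}" "\<forall>v. x v \<noteq> 0 \<longrightarrow> v \<in> \<sigma>"
    "sum x V = 1"
  shows "x \<in> XX"
proof -
  have sub: "{v. x v \<noteq> 0} \<subseteq> V" using assms(2,4) by blast
  have "\<exists>w\<in>V. \<forall>u\<in>{v. x v \<noteq> 0}. E u w" using assms(3,4) unfolding Nb_def by blast
  moreover have "sum x {v. x v \<noteq> 0} = 1"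
  proof -
    have "\<forall>v. v \<notin> V \<longrightarrow> x v = 0" using sub by blast
    then show ?thesis using sum_supp[OF finV, of x] assms(5) by simp
  qed
  ultimately show ?thesis using assms(1) sub unfolding XX_def geom_real_def nbhd_complex_def by auto
qed

lemma phi_nonneg: "\<forall>i. 0 \<le> t i \<Longrightarrow> 0 \<le> phi t v"
  unfolding phi_def bary_def by (intro sum_nonneg) auto

lemma phi_outside: "v \<notin> V \<Longrightarrow> phi t v = 0"
proof -
  assume v: "v \<notin> V"
  have "\<forall>i\<in>{..<n}. t i * bary (e i) v = 0" using e_props v unfolding bary_def by auto
  then show ?thesis unfolding phi_def by (intro sum.neutral) blast
qed

lemma phi_sum:
  assumes "sum t {..<n} = 1"
  shows "sum (phi t) V = 1"
proof -
  have "sum (phi t) V = (\<Sum>i<n. \<Sum>v\<in>V. t i * bary (e i) v)"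
    unfolding phi_def by (rule sum.swap)
  also have "\<dots> = (\<Sum>i<n. t i * sum (bary (e i)) V)"
    by (simp add: sum_distrib_left)
  also have "\<dots> = (\<Sum>i<n. t i)"
    using sum_bary[OF finV] e_props by simp
  finally show ?thesis using assms by simp
qed

lemma phi_X:
  assumes t: "t \<in> geom_real KK"
  shows "phi t \<in> XX"
proof -
  define S where "S = {i. t i \<noteq> 0}"
  have KP: "\<forall>i. 0 \<le> t i" "\<forall>i. n \<le> i \<longrightarrow> t i = 0" "S \<in> KK" "sum t {..<n} = 1"
    using KK_props[OF t] unfolding S_def by auto
  have Sn: "S \<subseteq> {..<n}" using KP(3) unfolding KK_def by blast
  have finS: "finite S" using Sn finite_subset by blast
  have neS: "S \<noteq> {}"
  proof
    assume "S = {}"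
    then have "\<forall>i. t i = 0" unfolding S_def by blast
    then show False using KP(4) by simp
  qed
  have chS: "\<forall>i\<in>S. \<forall>j\<in>S. e i \<subseteq> e j \<or> e j \<subseteq> e i" using KP(3) unfolding KK_def by blast
  obtain i0 where i0: "i0 \<in> S" "\<forall>j\<in>S. e j \<subseteq> e i0"
    using chain_top[OF finS neS _ chS] e_fin Sn by blast
  have i0n: "i0 < n" using i0 Sn by blast
  have supp: "\<forall>v. phi t v \<noteq> 0 \<longrightarrow> v \<in> e i0"
  proof (intro allI impI)
    fix v assume "phi t v \<noteq> 0"
    then have "sum (\<lambda>i. t i / real (card (e i))) {j\<in>S. v \<in> e j} \<noteq> 0"
      using phi_chain[OF t] unfolding S_def by simp
    then have "{j\<in>S. v \<in> e j} \<noteq> {}" by (metis sum.empty)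
    then show "v \<in> e i0" using i0 by blast
  qed
  show ?thesis
    by (rule XX_intro[OF _ _ _ supp]) (use phi_nonneg KP e_props[OF i0n] phi_sum in auto)
qed

lemma mw_pos_face:
  assumes x: "x \<in> XX" and tau: "\<tau> \<in> TT" and pos: "mw V x \<tau> > 0"
  shows "\<tau> \<subseteq> {v. x v \<noteq> 0}" "cl V E \<tau> \<in> CF V E"
proof -
  have tv: "\<tau> \<subseteq> V" "\<tau> \<noteq> {}" using tau unfolding TT_def by auto
  show ts: "\<tau> \<subseteq> {v. x v \<noteq> 0}" using mw_pos_imp(2)[OF finV tv pos] by auto
  have "Nb V E {v. x v \<noteq> 0} \<subseteq> Nb V E \<tau>" using Nb_anti[OF ts] .
  then have "Nb V E \<tau> \<noteq> {}" using XX_props(4)[OF x] by blast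
  then show "cl V E \<tau> \<in> CF V E" using cl_CF sym tv by blast
qed

lemma rho0_nonneg: "0 \<le> rho0 x i"
  unfolding rho0_def by (intro sum_nonneg mult_nonneg_nonneg mw_nonneg) simp

lemma rho0_pos:
  assumes "rho0 x i \<noteq> 0"
  shows "\<exists>\<tau>\<in>TT. cl V E \<tau> = e i \<and> mw V x \<tau> > 0"
proof (rule ccontr)
  assume "\<not> ?thesis"
  then have "\<forall>\<tau>\<in>{\<tau>\<in>TT. cl V E \<tau> = e i}. real (card \<tau>) * mw V x \<tau> = 0"
    using mw_nonneg[of V x] by (auto simp: less_le)
  then have "rho0 x i = 0" unfolding rho0_def by (intro sum.neutral) blast
  then show False using assms by simp
qed

lemma DD_pos:
  assumes x: "x \<in> XX"
  shows "DD x > 0"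
proof -
  have "{v. x v \<noteq> 0} \<noteq> {}"
  proof
    assume "{v. x v \<noteq> 0} = {}"
    then have "\<forall>v. x v = 0" by blast
    then show False using XX_props(5)[OF x] by simp
  qed
  then obtain v0 where v0: "x v0 \<noteq> 0" by blast
  then have v0V: "v0 \<in> V" using XX_props(2)[OF x] by blast
  have "x v0 > 0" using v0 XX_props(1)[OF x] by (simp add: less_le)
  then obtain \<tau> where tau: "\<tau> \<subseteq> V" "\<tau> \<noteq> {}" "mw V x \<tau> > 0"
    using mw_exists_pos[OF finV v0V] by blast
  have tT: "\<tau> \<in> TT" using tau unfolding TT_def by blast
  obtain i where i: "i < n" "e i = cl V E \<tau>"
    using CF_e mw_pos_face(2)[OF x tT tau(3)] by blast
  have "finite \<tau>" using finite_subset[OF tau(1) finV] .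
  then have ct: "card \<tau> > 0" using tau(2) by (simp add: card_gt_0_iff)
  have "real (card \<tau>) * mw V x \<tau> \<le> rho0 x i"
    unfolding rho0_def
    by (rule member_le_sum[where f="\<lambda>\<tau>. real (card \<tau>) * mw V x \<tau>"])
      (use tT i TT_fin in \<open>auto intro!: mult_nonneg_nonneg mw_nonneg\<close>)
  moreover have "real (card \<tau>) * mw V x \<tau> > 0" using ct tau(3) by simp
  moreover have "rho0 x i \<le> DD x"
    unfolding DD_def by (rule member_le_sum) (use i rho0_nonneg in auto)
  ultimately show ?thesis by linarith
qed

lemma rho_K:
  assumes x: "x \<in> XX"
  shows "rho x \<in> geom_real KK"
proof -
  have D: "DD x > 0" using DD_pos[OF x] .
  have nn: "\<forall>i. 0 \<le> rho x i" unfolding rho_def using rho0_nonneg D by simp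
  have supp: "{i. rho x i \<noteq> 0} \<subseteq> {..<n}" unfolding rho_def by auto
  have ch: "\<forall>i\<in>{i. rho x i \<noteq> 0}. \<forall>j\<in>{i. rho x i \<noteq> 0}. e i \<subseteq> e j \<or> e j \<subseteq> e i"
  proof (intro ballI)
    fix i j assume i: "i \<in> {i. rho x i \<noteq> 0}" and j: "j \<in> {i. rho x i \<noteq> 0}"
    have "rho0 x i \<noteq> 0" "rho0 x j \<noteq> 0" using i j unfolding rho_def by (auto split: if_splits)
    then obtain \<tau> \<sigma> where ts: "\<tau>\<in>TT" "cl V E \<tau> = e i" "mw V x \<tau> > 0"
        "\<sigma>\<in>TT" "cl V E \<sigma> = e j" "mw V x \<sigma> > 0"
      using rho0_pos[of x i] rho0_pos[of x j] by blast
    have "\<tau> \<subseteq> \<sigma> \<or> \<sigma> \<subseteq> \<tau>"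
      using mw_nested[OF finV _ _ ts(3) _ _ ts(6)] ts(1,4) unfolding TT_def by blast
    then show "e i \<subseteq> e j \<or> e j \<subseteq> e i"
    proof
      assume "\<tau> \<subseteq> \<sigma>" then have "cl V E \<tau> \<subseteq> cl V E \<sigma>" by (rule cl_mono)
      then show ?thesis using ts(2,5) by simp
    next
      assume "\<sigma> \<subseteq> \<tau>" then have "cl V E \<sigma> \<subseteq> cl V E \<tau>" by (rule cl_mono)
      then show ?thesis using ts(2,5) by simp
    qed
  qed
  have inK: "{i. rho x i \<noteq> 0} \<in> KK" using supp ch unfolding KK_def by blast
  have "sum (rho x) {i. rho x i \<noteq> 0} = sum (rho x) {..<n}"
    by (rule sum.mono_neutral_left) (use supp in auto)
  also have "\<dots> = (\<Sum>i<n. rho0 x i / DD x)" unfolding rho_def by simp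
  also have "\<dots> = 1" using D unfolding DD_def by (simp add: sum_divide_distrib[symmetric])
  finally show ?thesis unfolding geom_real_def using nn inK by auto
qed

lemma r_supp:
  assumes x: "x \<in> XX" and v: "phi (rho x) v \<noteq> 0"
  shows "v \<in> cl V E {v. x v \<noteq> 0}"
proof -
  have "\<exists>i\<in>{..<n}. rho x i * bary (e i) v \<noteq> 0"
  proof (rule ccontr)
    assume "\<not> ?thesis"
    then have "phi (rho x) v = 0" unfolding phi_def by (intro sum.neutral) blast
    then show False using v by simp
  qed
  then obtain i where i: "i \<in> {..<n}" "rho x i * bary (e i) v \<noteq> 0" by blast
  have vi: "v \<in> e i" using i(2) unfolding bary_def by (auto split: if_splits)
  have "rho0 x i \<noteq> 0" using i unfolding rho_def by auto
  then obtain \<tau> where ts: "\<tau>\<in>TT" "cl V E \<tau> = e i" "mw V x \<tau> > 0"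
    using rho0_pos by blast
  have "\<tau> \<subseteq> {v. x v \<noteq> 0}" using mw_pos_face(1)[OF x ts(1,3)] .
  then have "e i \<subseteq> cl V E {v. x v \<noteq> 0}" using cl_mono ts(2) by blast
  then show ?thesis using vi by blast
qed

definition hh :: "real \<times> ('v \<Rightarrow> real) \<Rightarrow> 'v \<Rightarrow> real" where
  "hh p = (\<lambda>v. (1 - fst p) * snd p v + fst p * phi (rho (snd p)) v)"

lemma hh_X:
  assumes x: "x \<in> XX" and t: "t \<in> {0..1}"
  shows "hh (t, x) \<in> XX"
proof -
  define S where "S = {v. x v \<noteq> 0}"
  have SV: "S \<subseteq> V" using XX_props(2)[OF x] unfolding S_def .
  have r: "rho x \<in> geom_real KK" using rho_K[OF x] .
  have rnn: "\<forall>v. 0 \<le> phi (rho x) v" using phi_nonneg KK_props(1)[OF r] by blast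
  have rsum: "sum (phi (rho x)) V = 1" using phi_sum KK_props(3)[OF r] by blast
  show ?thesis
  proof (rule XX_intro)
    show "\<forall>v. 0 \<le> hh (t, x) v" unfolding hh_def using t rnn XX_props(1)[OF x] by auto
    show "cl V E S \<subseteq> V" unfolding cl_def by (rule Nb_sub)
    show "Nb V E (cl V E S) \<noteq> {}" using Nb_cl[OF sym SV] XX_props(4)[OF x] unfolding S_def by simp
    show "\<forall>v. hh (t, x) v \<noteq> 0 \<longrightarrow> v \<in> cl V E S"
    proof (intro allI impI)
      fix v assume "hh (t, x) v \<noteq> 0"
      then have "x v \<noteq> 0 \<or> phi (rho x) v \<noteq> 0" unfolding hh_def by auto
      then show "v \<in> cl V E S"
      proof
        assume "x v \<noteq> 0" then show ?thesis using cl_sup[OF sym SV] unfolding S_def by blast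
      next
        assume "phi (rho x) v \<noteq> 0" then show ?thesis using r_supp[OF x] unfolding S_def by blast
      qed
    qed
    show "sum (hh (t, x)) V = 1"
      unfolding hh_def using XX_props(5)[OF x] rsum
      by (simp add: sum.distrib sum_distrib_left[symmetric])
  qed
qed

end




context nbsetup begin

lemma cont_phi: "continuous_on S phi"
proof (rule continuous_on_coordinatewise_then_product)
  fix v
  show "continuous_on S (\<lambda>t. phi t v)"
    unfolding phi_def by (intro continuous_on_sum continuous_on_mult continuous_on_const cont_coord)
qed

lemma cont_psi: "continuous_on S psi"
proof (rule continuous_on_coordinatewise_then_product)
  fix i
  show "continuous_on S (\<lambda>y. psi y i)"
  proof (cases "i < n")
    case True
    have "continuous_on S (\<lambda>y. real (card (e i)) * mw V y (e i))"
      by (intro continuous_on_mult continuous_on_const cont_mw finV e_fin True) (use e_props[OF True] in blast)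
    then show ?thesis unfolding psi_def using True by simp
  next
    case False
    then show ?thesis unfolding psi_def by simp
  qed
qed

lemma cont_rho0: "continuous_on S (\<lambda>x. rho0 x i)"
  unfolding rho0_def
proof (intro continuous_on_sum continuous_on_mult continuous_on_const)
  fix \<tau> assume "\<tau> \<in> {\<tau>\<in>TT. cl V E \<tau> = e i}"
  then have "\<tau> \<subseteq> V" "\<tau> \<noteq> {}" unfolding TT_def by auto
  then show "continuous_on S (\<lambda>x. mw V x \<tau>)"
    using cont_mw[OF finV] finite_subset[OF _ finV] by blast
qed

lemma cont_DD: "continuous_on S DD"
  unfolding DD_def by (intro continuous_on_sum cont_rho0)

lemma cont_rho: "continuous_on XX rho"
proof (rule continuous_on_coordinatewise_then_product)
  fix i
  show "continuous_on XX (\<lambda>x. rho x i)"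
  proof (cases "i < n")
    case True
    have "continuous_on XX (\<lambda>x. rho0 x i / DD x)"
      by (rule continuous_on_divide[OF cont_rho0 cont_DD]) (use DD_pos in fastforce)
    then show ?thesis unfolding rho_def using True by simp
  next
    case False
    then show ?thesis unfolding rho_def by simp
  qed
qed

lemma cont_r: "continuous_on XX (\<lambda>x. phi (rho x))"
  using continuous_on_compose[OF cont_rho cont_phi] by (simp add: o_def)

lemma cont_hh: "continuous_on ({0..1} \<times> XX) hh"
proof (rule continuous_on_coordinatewise_then_product)
  fix v
  have c1: "continuous_on ({0..1} \<times> XX) (\<lambda>p::real \<times> ('v \<Rightarrow> real). snd p v)"
    by (rule continuous_on_compose2[OF cont_coord continuous_on_snd[OF continuous_on_id]]) auto
  have c2: "continuous_on ({0..1} \<times> XX) (\<lambda>p::real \<times> ('v \<Rightarrow> real). phi (rho (snd p)) v)"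
    by (rule continuous_on_compose2[OF continuous_on_product_then_coordinatewise[OF cont_r]
          continuous_on_snd[OF continuous_on_id]]) auto
  have c3: "continuous_on ({0..1} \<times> XX) (\<lambda>p::real \<times> ('v \<Rightarrow> real). fst p)"
    by (rule continuous_on_fst[OF continuous_on_id])
  show "continuous_on ({0..1} \<times> XX) (\<lambda>p. hh p v)"
    unfolding hh_def by (intro continuous_on_add continuous_on_mult continuous_on_diff continuous_on_const c1 c2 c3)
qed

lemma KK_complex: "finite_simplicial_complex KK"
proof -
  have "KK \<subseteq> Pow {..<n}" unfolding KK_def by blast
  then have "finite KK" using finite_subset[of KK "Pow {..<n}"] by simp
  moreover have "\<forall>I\<in>KK. finite I" unfolding KK_def using finite_subset by blast
  moreover have "\<forall>I\<in>KK. \<forall>J. J \<subseteq> I \<longrightarrow> J \<in> KK" unfolding KK_def by blast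
  ultimately show ?thesis unfolding finite_simplicial_complex_def by blast
qed

lemma KK_dim:
  assumes noK: "\<not> contains_Kab V E a b" and ab: "a \<ge> 1" "b \<ge> 1"
  shows "faces_card_le KK (a + b - 2)"
  unfolding faces_card_le_def
proof
  fix I assume I: "I \<in> KK"
  have In: "I \<subseteq> {..<n}" using I unfolding KK_def by blast
  have "card (e ` I) = card I" using card_image inj_on_subset[OF e_inj In] by blast
  moreover have "e ` I \<subseteq> CF V E" using In e_CF by blast
  moreover have "\<forall>x\<in>e ` I. \<forall>y\<in>e ` I. x \<subseteq> y \<or> y \<subseteq> x" using I unfolding KK_def by blast
  ultimately show "card I \<le> a + b - 2"
    using chain_card_bound[OF fsg noK ab] by metis
qed

end




theorem lemma2p3:
  fixes V :: "'v set" and E :: "'v \<Rightarrow> 'v \<Rightarrow> bool" and a b :: nat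
  assumes "a \<ge> 1" and "b \<ge> 1"
    and "finite_simple_graph V E"
    and "\<not> contains_Kab V E a b"
  shows "\<exists>A (K :: nat set set).
           strong_deformation_retract_of A (geom_real (nbhd_complex V E)) \<and>
           finite_simplicial_complex K \<and> faces_card_le K (a + b - 2) \<and>
           A homeomorphic geom_real K"
proof -
  have finV: "finite V" using assms(3) unfolding finite_simple_graph_def by blast
  have "CF V E \<subseteq> Pow V" unfolding CF_def by blast
  then have "finite (CF V E)" using finite_subset[of "CF V E" "Pow V"] finV by simp
  then obtain e where e: "bij_betw e {0..<card (CF V E)} (CF V E)"
    using ex_bij_betw_nat_finite by blast
  then have e': "bij_betw e {..<card (CF V E)} (CF V E)" by (simp add: atLeast0LessThan)
  interpret N: nbsetup V E e "card (CF V E)"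
    by unfold_locales (use assms(3) e' in auto)
  define A where "A = N.phi ` geom_real N.KK"
  have AX: "A \<subseteq> N.XX" unfolding A_def using N.phi_X by blast
  have sdr: "strong_deformation_retract_of A N.XX"
    unfolding strong_deformation_retract_of_def
  proof (intro conjI exI[of _ N.hh])
    show "A \<subseteq> N.XX" by (rule AX)
    show "continuous_on ({0..1} \<times> N.XX) N.hh" by (rule N.cont_hh)
    show "N.hh ` ({0..1} \<times> N.XX) \<subseteq> N.XX" using N.hh_X by auto
    show "\<forall>x\<in>N.XX. N.hh (0, x) = x" unfolding N.hh_def by auto
    show "\<forall>x\<in>N.XX. N.hh (1, x) \<in> A" unfolding N.hh_def A_def using N.rho_K by auto
    show "\<forall>t\<in>{0..1}. \<forall>y\<in>A. N.hh (t, y) = y"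
    proof (intro ballI)
      fix t y assume "y \<in> A"
      then obtain s where s: "s \<in> geom_real N.KK" "y = N.phi s" unfolding A_def by blast
      have "N.rho y = s" using N.rho_phi[OF s(1)] s(2) by simp
      then show "N.hh (t, y) = y" unfolding N.hh_def using s(2) by (auto simp: algebra_simps)
    qed
  qed
  have hom: "A homeomorphic geom_real N.KK"
    unfolding homeomorphic_def
  proof (intro exI[of _ N.psi] exI[of _ N.phi] homeomorphismI)
    show "continuous_on A N.psi" by (rule N.cont_psi)
    show "continuous_on (geom_real N.KK) N.phi" by (rule N.cont_phi)
    show "N.psi ` A \<subseteq> geom_real N.KK" unfolding A_def using N.psi_phi by auto
    show "N.phi ` geom_real N.KK \<subseteq> A" unfolding A_def by blast
    show "N.phi (N.psi x) = x" if "x \<in> A" for x using that N.psi_phi unfolding A_def by auto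
    show "N.psi (N.phi y) = y" if "y \<in> geom_real N.KK" for y using that N.psi_phi by auto
  qed
  show ?thesis
    using sdr hom N.KK_complex N.KK_dim[OF assms(4) assms(1,2)] unfolding N.XX_def by blast
qed


end
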